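(* Let $G$ be a nilpotent group of class $c$ and let $n=\lceil c/2\rceil$. Then the image of the natural homomorphism $\gamma_n(G)\otimes G\to G\otimes G$ (induced by inclusion) is abelian.
   Context: $\gamma_n(G)$ is the $n$-th term of the lower central series. Conventions: ${}^g h = ghg^{-1}$. For $N\trianglelefteq G$, $N\otimes G$ is generated by symbols $x\otimes g$ ($x\in N$, $g\in G$) subject to $xx'\otimes g=({}^x x'\otimes {}^x g)(x\otimes g)$ and $x\otimes gg'=(x\otimes g)({}^g x\otimes {}^g g')$; $G\otimes G$ is the case $N=G$. *)

theory Defs
  imports Complex_Main "HOL-Algebra.Algebra"
begin

(* lcs G k = gamma_(k+1)(G):  gamma_1 = G,  gamma_(i+1) = [gamma_i, G] *)
fun lcs :: "('a, 'b) monoid_scheme \<Rightarrow> nat \<Rightarrow> 'a set" where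
  "lcs G 0 = carrier G"
| "lcs G (Suc k) = generate G
     (\<Union>x \<in> lcs G k. \<Union>g \<in> carrier G. {x \<otimes>\<^bsub>G\<^esub> g \<otimes>\<^bsub>G\<^esub> inv\<^bsub>G\<^esub> x \<otimes>\<^bsub>G\<^esub> inv\<^bsub>G\<^esub> g})"

(* gamma G n = gamma_n(G) for n >= 1 (gamma 0 is set to G by convention) *)
definition gamma :: "('a, 'b) monoid_scheme \<Rightarrow> nat \<Rightarrow> 'a set" where
  "gamma G n = lcs G (n - 1)"

definition nilpotent_class :: "('a, 'b) monoid_scheme \<Rightarrow> nat \<Rightarrow> bool" where
  "nilpotent_class G c \<longleftrightarrow>
     gamma G (c + 1) = {\<one>\<^bsub>G\<^esub>} \<and> (\<forall>k < c. gamma G (k + 1) \<noteq> {\<one>\<^bsub>G\<^esub>})"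

(* letters: (True,(x,g)) stands for the generator x\<otimes>g, (False,(x,g)) for its inverse *)
type_synonym 'a tletter = "bool \<times> ('a \<times> 'a)"
type_synonym 'a tword = "'a tletter list"

definition gconj :: "('a, 'b) monoid_scheme \<Rightarrow> 'a \<Rightarrow> 'a \<Rightarrow> 'a" where
  "gconj G g h = g \<otimes>\<^bsub>G\<^esub> h \<otimes>\<^bsub>G\<^esub> inv\<^bsub>G\<^esub> g"

definition tgen :: "'a \<Rightarrow> 'a \<Rightarrow> 'a tword" where
  "tgen x g = [(True, (x, g))]"

definition winv :: "'a tword \<Rightarrow> 'a tword" where
  "winv w = rev (map (\<lambda>(b, p). (\<not> b, p)) w)"

definition tletters :: "('a, 'b) monoid_scheme \<Rightarrow> 'a set \<Rightarrow> 'a tletter set" where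
  "tletters G N = UNIV \<times> (N \<times> carrier G)"

definition trelators :: "('a, 'b) monoid_scheme \<Rightarrow> 'a set \<Rightarrow> 'a tword set" where
  "trelators G N =
     {tgen (x \<otimes>\<^bsub>G\<^esub> x') g @ winv (tgen (gconj G x x') (gconj G x g) @ tgen x g)
        | x x' g. x \<in> N \<and> x' \<in> N \<and> g \<in> carrier G}
   \<union> {tgen x (g \<otimes>\<^bsub>G\<^esub> g') @ winv (tgen x g @ tgen (gconj G g x) (gconj G g g'))
        | x g g'. x \<in> N \<and> g \<in> carrier G \<and> g' \<in> carrier G}"

inductive tcong :: "('a, 'b) monoid_scheme \<Rightarrow> 'a set \<Rightarrow> 'a tword \<Rightarrow> 'a tword \<Rightarrow> bool"
  for G N where
  refl: "tcong G N w w"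
| sym: "tcong G N u v \<Longrightarrow> tcong G N v u"
| trans: "tcong G N u v \<Longrightarrow> tcong G N v w \<Longrightarrow> tcong G N u w"
| ctxt: "tcong G N u v \<Longrightarrow> tcong G N (a @ u @ b) (a @ v @ b)"
| cancel: "l \<in> tletters G N \<Longrightarrow> tcong G N ([l] @ winv [l]) []"
| rel: "r \<in> trelators G N \<Longrightarrow> tcong G N r []"

definition tclass :: "('a, 'b) monoid_scheme \<Rightarrow> 'a set \<Rightarrow> 'a tword \<Rightarrow> 'a tword set" where
  "tclass G N w = {v. set v \<subseteq> tletters G N \<and> tcong G N w v}"

definition trep :: "'a tword set \<Rightarrow> 'a tword" where
  "trep A = (SOME w. w \<in> A)"

(* the group N \<otimes> G; the tensor square G \<otimes> G is tensor G (carrier G) *)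
definition tensor :: "('a, 'b) monoid_scheme \<Rightarrow> 'a set \<Rightarrow> 'a tword set monoid" where
  "tensor G N =
     \<lparr> carrier = tclass G N ` {w. set w \<subseteq> tletters G N},
       monoid.mult = (\<lambda>A B. tclass G N (trep A @ trep B)),
       monoid.one = tclass G N [] \<rparr>"

(* the natural homomorphism N \<otimes> G \<rightarrow> G \<otimes> G induced by the inclusion N \<subseteq> G:
   x\<otimes>g \<mapsto> x\<otimes>g on generators, i.e. a class of words is sent to the class of the same word *)
definition tensor_incl :: "('a, 'b) monoid_scheme \<Rightarrow> 'a set \<Rightarrow> 'a tword set \<Rightarrow> 'a tword set" where
  "tensor_incl G N A = tclass G (carrier G) (trep A)"

end

theory Submission
  imports Defs
begin

definition comm :: "('a, 'b) monoid_scheme \<Rightarrow> 'a \<Rightarrow> 'a \<Rightarrow> 'a" where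
  "comm G x y = x \<otimes>\<^bsub>G\<^esub> y \<otimes>\<^bsub>G\<^esub> inv\<^bsub>G\<^esub> x \<otimes>\<^bsub>G\<^esub> inv\<^bsub>G\<^esub> y"

context group begin

lemma inv_cancel_left1 [simp]: "x \<in> carrier G \<Longrightarrow> y \<in> carrier G \<Longrightarrow> inv x \<otimes> (x \<otimes> y) = y"
  by (simp add: m_assoc[symmetric])
lemma inv_cancel_left2 [simp]: "x \<in> carrier G \<Longrightarrow> y \<in> carrier G \<Longrightarrow> x \<otimes> (inv x \<otimes> y) = y"
  by (simp add: m_assoc[symmetric])

lemmas gsimps = m_assoc inv_mult_group

lemma comm_closed [simp]: "x \<in> carrier G \<Longrightarrow> y \<in> carrier G \<Longrightarrow> comm G x y \<in> carrier G"
  by (simp add: comm_def)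

lemma hall_witt:
  assumes "x \<in> carrier G" "w \<in> carrier G" "f \<in> carrier G"
  shows "comm G (f \<otimes> x \<otimes> inv f) (comm G w f) =
         comm G (comm G f x) (x \<otimes> w \<otimes> inv x) \<otimes> comm G (comm G x w) (w \<otimes> f \<otimes> inv w)"
  using assms by (simp add: comm_def gsimps)

lemma lcs_Suc: "lcs G (Suc k) = generate G (\<Union>x \<in> lcs G k. \<Union>g \<in> carrier G. {comm G x g})"
  by (simp add: comm_def)

declare lcs.simps(2)[simp del]

lemma lcs_sub: "lcs G k \<subseteq> carrier G"
proof (induction k)
  case 0 then show ?case by simp
next
  case (Suc k) then show ?case unfolding lcs_Suc
    by (intro generate_incl) (auto intro!: comm_closed)
qed

lemma lcs_carrier: "x \<in> lcs G k \<Longrightarrow> x \<in> carrier G"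
  using lcs_sub by blast

lemma lcs_subgroup: "subgroup (lcs G k) G"
proof (cases k)
  case 0 then show ?thesis by (simp add: subgroup_self)
next
  case (Suc m)
  have "(\<Union>x \<in> lcs G m. \<Union>g \<in> carrier G. {comm G x g}) \<subseteq> carrier G"
    by (auto intro!: comm_closed dest: lcs_carrier)
  then show ?thesis unfolding Suc lcs_Suc
    by (intro generate_is_subgroup)
qed

lemma lcs_one [simp]: "\<one> \<in> lcs G k"
  by (rule subgroup.one_closed[OF lcs_subgroup])
lemma lcs_mult [simp]: "x \<in> lcs G k \<Longrightarrow> y \<in> lcs G k \<Longrightarrow> x \<otimes> y \<in> lcs G k"
  by (rule subgroup.m_closed[OF lcs_subgroup])
lemma lcs_inv [simp]: "x \<in> lcs G k \<Longrightarrow> inv x \<in> lcs G k"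
  by (rule subgroup.m_inv_closed[OF lcs_subgroup])

lemma comm_gen: "x \<in> lcs G k \<Longrightarrow> g \<in> carrier G \<Longrightarrow> comm G x g \<in> lcs G (Suc k)"
  unfolding lcs_Suc by (rule generate.incl, rule UN_I[of x], assumption, rule UN_I[of g], assumption, simp)

lemma comm_inv: "x \<in> carrier G \<Longrightarrow> y \<in> carrier G \<Longrightarrow> inv (comm G x y) = comm G y x"
  by (simp add: comm_def gsimps)

lemma comm_gen': "x \<in> lcs G k \<Longrightarrow> g \<in> carrier G \<Longrightarrow> comm G g x \<in> lcs G (Suc k)"
proof -
  assume a: "x \<in> lcs G k" "g \<in> carrier G"
  have "comm G g x = inv (comm G x g)" using comm_inv[OF lcs_carrier[OF a(1)] a(2)] by simp
  then show ?thesis using lcs_inv[OF comm_gen[OF a]] by simp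
qed

lemma lcs_conj: "g \<in> carrier G \<Longrightarrow> x \<in> lcs G k \<Longrightarrow> g \<otimes> x \<otimes> inv g \<in> lcs G k"
proof (induction k arbitrary: x)
  case 0 then show ?case by simp
next
  case (Suc k)
  from Suc.prems(2) show ?case unfolding lcs_Suc
  proof (induction x rule: generate.induct)
    case one then show ?case using \<open>g \<in> carrier G\<close> by (simp add: generate.one)
  next
    case (incl h)
    then obtain y f where yf: "y \<in> lcs G k" "f \<in> carrier G" "h = comm G y f" by blast
    have e1: "g \<otimes> h \<otimes> inv g = comm G (g \<otimes> y \<otimes> inv g) (g \<otimes> f \<otimes> inv g)"
      using yf lcs_carrier[of y k] \<open>g \<in> carrier G\<close> by (simp add: comm_def gsimps)
    have e2: "g \<otimes> y \<otimes> inv g \<in> lcs G k" using Suc.IH yf \<open>g \<in> carrier G\<close> by blast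
    have e3: "comm G (g \<otimes> y \<otimes> inv g) (g \<otimes> f \<otimes> inv g) \<in> (\<Union>x\<in>lcs G k. \<Union>g\<in>carrier G. {comm G x g})"
      using e2 yf(2) \<open>g \<in> carrier G\<close> by (intro UN_I[of "g \<otimes> y \<otimes> inv g"] UN_I[of "g \<otimes> f \<otimes> inv g"]) auto
    show ?case using generate.incl[OF e3] e1 by simp
  next
    case (inv h)
    then obtain y f where yf: "y \<in> lcs G k" "f \<in> carrier G" "h = comm G y f" by blast
    have e1: "g \<otimes> inv h \<otimes> inv g = inv (comm G (g \<otimes> y \<otimes> inv g) (g \<otimes> f \<otimes> inv g))"
      using yf lcs_carrier[of y k] \<open>g \<in> carrier G\<close> by (simp add: comm_def gsimps)
    have e2: "g \<otimes> y \<otimes> inv g \<in> lcs G k" using Suc.IH yf \<open>g \<in> carrier G\<close> by blast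
    have e3: "comm G (g \<otimes> y \<otimes> inv g) (g \<otimes> f \<otimes> inv g) \<in> (\<Union>x\<in>lcs G k. \<Union>g\<in>carrier G. {comm G x g})"
      using e2 yf(2) \<open>g \<in> carrier G\<close> by (intro UN_I[of "g \<otimes> y \<otimes> inv g"] UN_I[of "g \<otimes> f \<otimes> inv g"]) auto
    show ?case using generate.inv[OF e3] e1 by simp
  next
    case (eng h1 h2)
    have c1: "h1 \<in> carrier G" "h2 \<in> carrier G"
      using eng.hyps lcs_carrier[of h1 "Suc k"] lcs_carrier[of h2 "Suc k"] unfolding lcs_Suc by auto
    have "g \<otimes> (h1 \<otimes> h2) \<otimes> inv g = (g \<otimes> h1 \<otimes> inv g) \<otimes> (g \<otimes> h2 \<otimes> inv g)"
      using c1 \<open>g \<in> carrier G\<close> by (simp add: gsimps)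
    then show ?case using generate.eng[OF eng.IH] by simp
  qed
qed

lemma lcs_Suc_sub: "lcs G (Suc k) \<subseteq> lcs G k"
proof
  fix x assume "x \<in> lcs G (Suc k)"
  then show "x \<in> lcs G k" unfolding lcs_Suc
  proof (induction x rule: generate.induct)
    case one then show ?case by simp
  next
    case (incl h)
    then obtain y f where yf: "y \<in> lcs G k" "f \<in> carrier G" "h = comm G y f" by blast
    have "h = y \<otimes> (f \<otimes> inv y \<otimes> inv f)" using yf lcs_carrier[of y k] by (simp add: comm_def gsimps)
    then show ?case using lcs_mult[OF yf(1) lcs_conj[OF yf(2) lcs_inv[OF yf(1)]]] by simp
  next
    case (inv h)
    then obtain y f where yf: "y \<in> lcs G k" "f \<in> carrier G" "h = comm G y f" by blast
    have "h = y \<otimes> (f \<otimes> inv y \<otimes> inv f)" using yf lcs_carrier[of y k] by (simp add: comm_def gsimps)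
    then show ?case using lcs_inv[OF lcs_mult[OF yf(1) lcs_conj[OF yf(2) lcs_inv[OF yf(1)]]]] by simp
  next
    case (eng h1 h2) then show ?case by simp
  qed
qed

lemma lcs_antimono: "k \<le> m \<Longrightarrow> lcs G m \<subseteq> lcs G k"
proof (induction m rule: dec_induct)
  case base then show ?case by simp
next
  case (step m) then show ?case using lcs_Suc_sub[of m] by blast
qed

lemma lcs_comm: "x \<in> lcs G i \<Longrightarrow> y \<in> lcs G j \<Longrightarrow> comm G x y \<in> lcs G (i + j + 1)"
proof (induction j arbitrary: i x y)
  case 0 then show ?case using comm_gen[of x i y] by simp
next
  case (Suc j)
  have gen: "comm G x (comm G w f) \<in> lcs G (i + Suc j + 1)"
    if x: "x \<in> lcs G i" and w: "w \<in> lcs G j" and f: "f \<in> carrier G" for x w f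
  proof -
    have xc: "x \<in> carrier G" using lcs_carrier[OF x] .
    have wc: "w \<in> carrier G" using lcs_carrier[OF w] .
    define x0 where "x0 = inv f \<otimes> x \<otimes> inv (inv f)"
    have x0: "x0 \<in> lcs G i" unfolding x0_def by (rule lcs_conj[OF inv_closed[OF f] x])
    have x0c: "x0 \<in> carrier G" using lcs_carrier[OF x0] .
    have xe: "x = f \<otimes> x0 \<otimes> inv f" unfolding x0_def using xc f by (simp add: gsimps)
    have t1: "comm G (comm G x0 w) (w \<otimes> f \<otimes> inv w) \<in> lcs G (i + Suc j + 1)"
    proof -
      have "comm G x0 w \<in> lcs G (i + j + 1)" using Suc.IH x0 w by blast
      from comm_gen[OF this, of "w \<otimes> f \<otimes> inv w"]
      show ?thesis using wc f by simp
    qed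
    have t3: "comm G (comm G f x0) (x0 \<otimes> w \<otimes> inv x0) \<in> lcs G (i + Suc j + 1)"
    proof -
      have a: "comm G f x0 \<in> lcs G (Suc i)" using comm_gen'[OF x0 f] .
      have b: "x0 \<otimes> w \<otimes> inv x0 \<in> lcs G j" using lcs_conj[OF x0c w] .
      show ?thesis using Suc.IH[OF a b] by simp
    qed
    have "comm G x (comm G w f) = comm G (comm G f x0) (x0 \<otimes> w \<otimes> inv x0) \<otimes> comm G (comm G x0 w) (w \<otimes> f \<otimes> inv w)"
      using hall_witt[OF x0c wc f] xe by simp
    then show ?thesis using lcs_mult[OF t3 t1] by simp
  qed
  have xc: "x \<in> carrier G" using lcs_carrier[OF Suc.prems(1)] .
  from Suc.prems(2) show ?case unfolding lcs_Suc
  proof (induction y rule: generate.induct)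
    case one
    have "comm G x \<one> = \<one>" using xc by (simp add: comm_def)
    then show ?case using lcs_one[of "i + Suc j + 1"] by metis
  next
    case (incl h)
    then obtain w f where wf: "w \<in> lcs G j" "f \<in> carrier G" "h = comm G w f" by blast
    show ?case using gen[OF Suc.prems(1) wf(1) wf(2)] wf(3) by simp
  next
    case (inv h)
    then obtain w f where wf: "w \<in> lcs G j" "f \<in> carrier G" "h = comm G w f" by blast
    have hc: "h \<in> carrier G" using wf lcs_carrier[of w j] by simp
    have e: "comm G x (inv h) = inv h \<otimes> inv (comm G x h) \<otimes> inv (inv h)"
      using xc hc by (simp add: comm_def gsimps)
    have "comm G x h \<in> lcs G (i + Suc j + 1)" using gen[OF Suc.prems(1) wf(1) wf(2)] wf(3) by simp
    from lcs_conj[OF inv_closed[OF hc] lcs_inv[OF this]]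
    show ?case using e by simp
  next
    case (eng h1 h2)
    have c1: "h1 \<in> carrier G" "h2 \<in> carrier G"
      using eng.hyps lcs_carrier[of h1 "Suc j"] lcs_carrier[of h2 "Suc j"] unfolding lcs_Suc by auto
    have "comm G x (h1 \<otimes> h2) = comm G x h1 \<otimes> (h1 \<otimes> comm G x h2 \<otimes> inv h1)"
      using xc c1 by (simp add: comm_def gsimps)
    then show ?case using lcs_mult[OF eng.IH(1) lcs_conj[OF c1(1) eng.IH(2)]] by simp
  qed
qed

lemma lcs_commute:
  assumes nil: "lcs G c = {\<one>}" and x: "x \<in> lcs G i" and y: "y \<in> lcs G j" and le: "c \<le> i + j + 1"
  shows "x \<otimes> y = y \<otimes> x"
proof -
  have "comm G x y \<in> lcs G c" using lcs_comm[OF x y] lcs_antimono[OF le] by blast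
  then have e: "comm G x y = \<one>" using nil by simp
  have xc: "x \<in> carrier G" using lcs_carrier[OF x] .
  have yc: "y \<in> carrier G" using lcs_carrier[OF y] .
  have "x \<otimes> y = comm G x y \<otimes> (y \<otimes> x)" using xc yc by (simp add: comm_def gsimps)
  also have "\<dots> = y \<otimes> x" using e xc yc by simp
  finally show ?thesis .
qed

lemma lcs_triv: "lcs G c = {\<one>} \<Longrightarrow> c \<le> k \<Longrightarrow> x \<in> lcs G k \<Longrightarrow> x = \<one>"
proof -
  assume a: "lcs G c = {\<one>}" "c \<le> k" "x \<in> lcs G k"
  have "x \<in> lcs G c" using lcs_antimono[OF a(2)] a(3) by (rule subsetD)
  then show ?thesis unfolding a(1) by (rule singletonD)
qed

end

abbreviation teq :: "('a, 'b) monoid_scheme \<Rightarrow> 'a tword \<Rightarrow> 'a tword \<Rightarrow> bool" where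
  "teq G u v \<equiv> tcong G (carrier G) u v"

abbreviation valid :: "('a, 'b) monoid_scheme \<Rightarrow> 'a tword \<Rightarrow> bool" where
  "valid G w \<equiv> set w \<subseteq> tletters G (carrier G)"

lemmas tcong_trans' [trans] = tcong.trans

lemma winv_append [simp]: "winv (u @ v) = winv v @ winv u"
  by (simp add: winv_def)

lemma winv_Nil [simp]: "winv [] = []"
  by (simp add: winv_def)

lemma winv_winv [simp]: "winv (winv w) = w"
  by (induction w) (auto simp: winv_def)

lemma valid_winv: "valid G w \<Longrightarrow> valid G (winv w)"
  by (auto simp: winv_def tletters_def)

lemma teq_app: "teq G u u' \<Longrightarrow> teq G v v' \<Longrightarrow> teq G (u @ v) (u' @ v')"
proof -
  assume a: "teq G u u'" "teq G v v'"
  have "teq G ([] @ u @ v) ([] @ u' @ v)" by (rule tcong.ctxt[OF a(1)])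
  moreover have "teq G (u' @ v @ []) (u' @ v' @ [])" by (rule tcong.ctxt[OF a(2)])
  ultimately show ?thesis using tcong.trans by fastforce
qed

lemma teq_app_l: "teq G v v' \<Longrightarrow> teq G (u @ v) (u @ v')"
  using teq_app tcong.refl by blast
lemma teq_app_r: "teq G u u' \<Longrightarrow> teq G (u @ v) (u' @ v)"
  using teq_app tcong.refl by blast

lemma teq_inv_r: "valid G w \<Longrightarrow> teq G (w @ winv w) []"
proof (induction w)
  case Nil then show ?case by (simp add: tcong.refl)
next
  case (Cons l w)
  have lv: "l \<in> tletters G (carrier G)" using Cons.prems by simp
  have "teq G ([l] @ (w @ winv w) @ winv [l]) ([l] @ [] @ winv [l])"
    using Cons by (intro tcong.ctxt) simp
  also have "teq G ([l] @ [] @ winv [l]) []"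
    using tcong.cancel[OF lv] by simp
  finally show ?case by (simp add: winv_def)
qed

lemma teq_inv_l: "valid G w \<Longrightarrow> teq G (winv w @ w) []"
proof -
  assume a: "valid G w"
  from teq_inv_r[OF valid_winv[OF a]] show ?thesis by simp
qed

lemma cancel_l: assumes "valid G u" "teq G (u @ v) (u @ v')" shows "teq G v v'"
proof -
  have "teq G v ((winv u @ u) @ v)"
    using teq_app_r[OF teq_inv_l[OF assms(1)], of v] by (simp add: tcong.sym)
  also have "teq G ((winv u @ u) @ v) (winv u @ (u @ v'))"
    using teq_app_l[OF assms(2), of "winv u"] by simp
  also have "teq G (winv u @ (u @ v')) v'"
    using teq_app_r[OF teq_inv_l[OF assms(1)], of v'] by simp
  finally show ?thesis .
qed

lemma cancel_r: assumes "valid G u" "teq G (v @ u) (v' @ u)" shows "teq G v v'"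
proof -
  have "teq G v (v @ (u @ winv u))"
    using teq_app_l[OF teq_inv_r[OF assms(1)], of v] by (simp add: tcong.sym)
  also have "teq G (v @ (u @ winv u)) ((v' @ u) @ winv u)"
    using teq_app_r[OF assms(2), of "winv u"] by simp
  also have "teq G ((v' @ u) @ winv u) v'"
    using teq_app_l[OF teq_inv_r[OF assms(1)], of v'] by simp
  finally show ?thesis .
qed

context group begin

lemma valid_tgen [simp]: "x \<in> carrier G \<Longrightarrow> g \<in> carrier G \<Longrightarrow> valid G (tgen x g)"
  by (simp add: tgen_def tletters_def)

lemma gconj_closed [simp]: "g \<in> carrier G \<Longrightarrow> x \<in> carrier G \<Longrightarrow> gconj G g x \<in> carrier G"
  by (simp add: gconj_def)

lemma rel_to_eq: assumes "valid G B" "teq G (A @ winv B) []" shows "teq G A B"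
proof -
  have "teq G A (A @ (winv B @ B))"
    using teq_app_l[OF teq_inv_l[OF assms(1)], of A] by (simp add: tcong.sym)
  also have "teq G (A @ (winv B @ B)) ([] @ B)"
    using teq_app_r[OF assms(2), of B] by simp
  finally show ?thesis by simp
qed

lemma R1: assumes "x \<in> carrier G" "x' \<in> carrier G" "g \<in> carrier G"
  shows "teq G (tgen (x \<otimes> x') g) (tgen (gconj G x x') (gconj G x g) @ tgen x g)"
proof (rule rel_to_eq)
  show "valid G (tgen (gconj G x x') (gconj G x g) @ tgen x g)" using assms by simp
  show "teq G (tgen (x \<otimes> x') g @ winv (tgen (gconj G x x') (gconj G x g) @ tgen x g)) []"
    by (rule tcong.rel) (unfold trelators_def, use assms in blast)
qed

lemma R2: assumes "x \<in> carrier G" "g \<in> carrier G" "g' \<in> carrier G"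
  shows "teq G (tgen x (g \<otimes> g')) (tgen x g @ tgen (gconj G g x) (gconj G g g'))"
proof (rule rel_to_eq)
  show "valid G (tgen x g @ tgen (gconj G g x) (gconj G g g'))" using assms by simp
  show "teq G (tgen x (g \<otimes> g') @ winv (tgen x g @ tgen (gconj G g x) (gconj G g g'))) []"
    by (rule tcong.rel) (unfold trelators_def, use assms in blast)
qed

lemma gconj_one [simp]: "x \<in> carrier G \<Longrightarrow> gconj G \<one> x = x"
  by (simp add: gconj_def)

lemma T_one_r: assumes "x \<in> carrier G" shows "teq G (tgen x \<one>) []"
proof -
  have "teq G (tgen x \<one> @ []) (tgen x \<one> @ tgen x \<one>)"
    using R2[OF assms one_closed one_closed] assms by simp
  from cancel_l[OF valid_tgen[OF assms one_closed] this] show ?thesis by (rule tcong.sym)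
qed

lemma T_one_l: assumes "g \<in> carrier G" shows "teq G (tgen \<one> g) []"
proof -
  have "teq G ([] @ tgen \<one> g) (tgen \<one> g @ tgen \<one> g)"
    using R1[OF one_closed one_closed assms] assms by simp
  from cancel_r[OF valid_tgen[OF one_closed assms] this] show ?thesis by (rule tcong.sym)
qed

lemma T_inv: assumes "y \<in> carrier G" "z \<in> carrier G" "teq G (tgen (gconj G (inv z) y) z) []"
  shows "teq G (tgen y (inv z)) []"
proof -
  have "teq G (tgen y \<one>) (tgen y (inv z) @ tgen (gconj G (inv z) y) z)"
    using R2[OF assms(1) inv_closed[OF assms(2)] assms(2)] assms by (simp add: gconj_def gsimps)
  also have "teq G (tgen y (inv z) @ tgen (gconj G (inv z) y) z) (tgen y (inv z) @ [])"
    by (rule teq_app_l[OF assms(3)])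
  finally have "teq G [] (tgen y (inv z))"
    using T_one_r[OF assms(1)] tcong.sym tcong.trans by fastforce
  then show ?thesis by (rule tcong.sym)
qed

lemma conj_ident:
  assumes m: "m \<in> carrier G" and n: "n \<in> carrier G" and a: "a \<in> carrier G" and b: "b \<in> carrier G"
  shows "teq G (tgen m n @ tgen (gconj G (n \<otimes> m) a) (gconj G (n \<otimes> m) b))
               (tgen (gconj G (m \<otimes> n) a) (gconj G (m \<otimes> n) b) @ tgen m n)"
proof -
  define P where "P = tgen (gconj G m a) (gconj G m n)"
  define Q where "Q = tgen (gconj G n m) (gconj G n b)"
  have Pv: "valid G P" and Qv: "valid G Q" unfolding P_def Q_def using m n a b by simp_all
  have e1: "gconj G n (m \<otimes> a) = gconj G n m \<otimes> gconj G n a"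
    using m n a by (simp add: gconj_def gsimps)
  have e2: "\<And>q. q \<in> carrier G \<Longrightarrow> gconj G (gconj G n m) (gconj G n q) = gconj G (n \<otimes> m) q"
    using m n by (simp add: gconj_def gsimps)
  have e3: "gconj G m (n \<otimes> b) = gconj G m n \<otimes> gconj G m b"
    using m n b by (simp add: gconj_def gsimps)
  have e4: "\<And>q. q \<in> carrier G \<Longrightarrow> gconj G (gconj G m n) (gconj G m q) = gconj G (m \<otimes> n) q"
    using m n by (simp add: gconj_def gsimps)
  have "teq G (tgen (m \<otimes> a) (n \<otimes> b)) (tgen (m \<otimes> a) n @ tgen (gconj G n (m \<otimes> a)) (gconj G n b))"
    using R2 m n a b by simp
  also have "teq G (tgen (m \<otimes> a) n @ tgen (gconj G n (m \<otimes> a)) (gconj G n b))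
                   ((P @ tgen m n) @ (tgen (gconj G (n \<otimes> m) a) (gconj G (n \<otimes> m) b) @ Q))"
  proof (rule teq_app)
    show "teq G (tgen (m \<otimes> a) n) (P @ tgen m n)" unfolding P_def using R1 m n a by simp
    show "teq G (tgen (gconj G n (m \<otimes> a)) (gconj G n b))
       (tgen (gconj G (n \<otimes> m) a) (gconj G (n \<otimes> m) b) @ Q)"
      unfolding e1 Q_def using R1[of "gconj G n m" "gconj G n a" "gconj G n b"] m n a b e2 by simp
  qed
  finally have w1: "teq G (tgen (m \<otimes> a) (n \<otimes> b))
       (P @ (tgen m n @ tgen (gconj G (n \<otimes> m) a) (gconj G (n \<otimes> m) b)) @ Q)" by simp
  have "teq G (tgen (m \<otimes> a) (n \<otimes> b)) (tgen (gconj G m a) (gconj G m (n \<otimes> b)) @ tgen m (n \<otimes> b))"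
    using R1 m n a b by simp
  also have "teq G (tgen (gconj G m a) (gconj G m (n \<otimes> b)) @ tgen m (n \<otimes> b))
        ((P @ tgen (gconj G (m \<otimes> n) a) (gconj G (m \<otimes> n) b)) @ (tgen m n @ Q))"
  proof (rule teq_app)
    show "teq G (tgen (gconj G m a) (gconj G m (n \<otimes> b)))
       (P @ tgen (gconj G (m \<otimes> n) a) (gconj G (m \<otimes> n) b))"
      unfolding e3 P_def using R2[of "gconj G m a" "gconj G m n" "gconj G m b"] m n a b e4 by simp
    show "teq G (tgen m (n \<otimes> b)) (tgen m n @ Q)" unfolding Q_def using R2 m n b by simp
  qed
  finally have w2: "teq G (tgen (m \<otimes> a) (n \<otimes> b))
       (P @ (tgen (gconj G (m \<otimes> n) a) (gconj G (m \<otimes> n) b) @ tgen m n) @ Q)" by simp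
  have "teq G (P @ (tgen m n @ tgen (gconj G (n \<otimes> m) a) (gconj G (n \<otimes> m) b)) @ Q)
              (P @ (tgen (gconj G (m \<otimes> n) a) (gconj G (m \<otimes> n) b) @ tgen m n) @ Q)"
    by (rule tcong.trans[OF tcong.sym[OF w1] w2])
  then have "teq G ((tgen m n @ tgen (gconj G (n \<otimes> m) a) (gconj G (n \<otimes> m) b)) @ Q)
              ((tgen (gconj G (m \<otimes> n) a) (gconj G (m \<otimes> n) b) @ tgen m n) @ Q)"
    using cancel_l[OF Pv] by simp
  then show ?thesis by (rule cancel_r[OF Qv])
qed

lemma commute_T:
  assumes m: "m \<in> carrier G" and n: "n \<in> carrier G" and a: "a \<in> carrier G" and b: "b \<in> carrier G"
    and mn: "m \<otimes> n = n \<otimes> m"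
  shows "teq G (tgen m n @ tgen a b) (tgen a b @ tgen m n)"
proof -
  define k where "k = inv (n \<otimes> m)"
  have kc: "k \<in> carrier G" unfolding k_def using m n by simp
  have ea: "gconj G (n \<otimes> m) (gconj G k a) = a" and eb: "gconj G (n \<otimes> m) (gconj G k b) = b"
    unfolding k_def using m n a b by (simp_all add: gconj_def gsimps)
  show ?thesis using conj_ident[OF m n gconj_closed[OF kc a] gconj_closed[OF kc b]] ea eb mn by simp
qed

end

lemma (in group) gconj_commute1: "x \<in> carrier G \<Longrightarrow> y \<in> carrier G \<Longrightarrow> x \<otimes> y = y \<otimes> x \<Longrightarrow> gconj G x y = y"
  by (simp add: gconj_def m_assoc)
lemma (in group) gconj_commute2: "x \<in> carrier G \<Longrightarrow> y \<in> carrier G \<Longrightarrow> y \<otimes> x = x \<otimes> y \<Longrightarrow> gconj G x y = y"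
  using gconj_commute1[of x y] by simp
lemma (in group) gconj_comm: "x \<in> carrier G \<Longrightarrow> y \<in> carrier G \<Longrightarrow> gconj G x y = comm G x y \<otimes> y"
  by (simp add: gconj_def comm_def gsimps)

locale nilp = group G for G (structure) +
  fixes c v :: nat
  assumes nil: "lcs G c = {\<one>}" and bnd: "c \<le> 2 * v + 2"
begin

lemma commute: "x \<in> lcs G i \<Longrightarrow> y \<in> lcs G j \<Longrightarrow> c \<le> i + j + 1 \<Longrightarrow> x \<otimes> y = y \<otimes> x"
  using lcs_commute[OF nil] by blast

lemma triv: "c \<le> k \<Longrightarrow> x \<in> lcs G k \<Longrightarrow> x = \<one>"
  using lcs_triv[OF nil] by blast

lemma P_aux:
  assumes V: "\<And>b' y z. b < b' \<Longrightarrow> y \<in> lcs G a \<Longrightarrow> z \<in> lcs G b' \<Longrightarrow> teq G (tgen y z) []"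
  shows "c - b' \<le> k \<Longrightarrow> b < b' \<Longrightarrow> c \<le> a + b' \<Longrightarrow> y \<in> lcs G a \<Longrightarrow> z \<in> lcs G b' \<Longrightarrow> f \<in> carrier G
     \<Longrightarrow> teq G (tgen y (z \<otimes> f)) (tgen y f)"
proof (induction k arbitrary: b' z)
  case 0
  then have "z = \<one>" using triv by simp
  then show ?case using 0 by (simp add: tcong.refl)
next
  case (Suc k)
  show ?case
  proof (cases "c \<le> b'")
    case True
    then have "z = \<one>" using triv Suc.prems by simp
    then show ?thesis using Suc.prems by (simp add: tcong.refl)
  next
    case False
    have yc: "y \<in> carrier G" using lcs_carrier[OF Suc.prems(4)] .
    have zc: "z \<in> carrier G" using lcs_carrier[OF Suc.prems(5)] .
    have f: "f \<in> carrier G" using Suc.prems(6) .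
    have e1: "gconj G z y = y"
      using gconj_commute1[OF zc yc commute[OF Suc.prems(5) Suc.prems(4)]] Suc.prems(3) by simp
    have cz: "comm G z f \<in> lcs G (Suc b')" using comm_gen[OF Suc.prems(5) f] .
    have "teq G (tgen y (z \<otimes> f)) (tgen y z @ tgen (gconj G z y) (gconj G z f))"
      using R2[OF yc zc f] .
    also have "teq G (tgen y z @ tgen (gconj G z y) (gconj G z f)) ([] @ tgen y f)"
    proof (rule teq_app)
      show "teq G (tgen y z) []" using V Suc.prems by blast
      have "teq G (tgen y (comm G z f \<otimes> f)) (tgen y f)"
        using Suc.IH[of "Suc b'" "comm G z f"] Suc.prems False cz by simp
      then show "teq G (tgen (gconj G z y) (gconj G z f)) (tgen y f)"
        using e1 gconj_comm[OF zc f] by simp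
    qed
    finally show ?thesis by simp
  qed
qed

lemma gen_step:
  assumes Vlow: "\<And>y z. y \<in> lcs G (Suc a) \<Longrightarrow> z \<in> lcs G b0 \<Longrightarrow> teq G (tgen y z) []"
    and P: "\<And>b' y z f. Suc b0 < b' \<Longrightarrow> c \<le> a + b' \<Longrightarrow> y \<in> lcs G a \<Longrightarrow> z \<in> lcs G b' \<Longrightarrow> f \<in> carrier G
              \<Longrightarrow> teq G (tgen y (z \<otimes> f)) (tgen y f)"
    and av: "v \<le> a" and cab: "c \<le> a + Suc b0"
    and y: "y \<in> lcs G a" and w: "w \<in> lcs G b0" and f: "f \<in> carrier G"
  shows "teq G (tgen y (comm G w f)) []"
proof -
  have yc: "y \<in> carrier G" using lcs_carrier[OF y] .
  have wc: "w \<in> carrier G" using lcs_carrier[OF w] .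
  define k where "k = comm G w f"
  define p where "p = comm G f y"
  have k: "k \<in> lcs G (Suc b0)" unfolding k_def using comm_gen[OF w f] .
  have p: "p \<in> lcs G (Suc a)" unfolding p_def using comm_gen'[OF y f] .
  have kc: "k \<in> carrier G" using lcs_carrier[OF k] .
  have pc: "p \<in> carrier G" using lcs_carrier[OF p] .
  have cyw: "y \<otimes> w = w \<otimes> y" using commute[OF y w] cab by simp
  have cky: "k \<otimes> y = y \<otimes> k" using commute[OF k y] cab by simp
  have cpw: "p \<otimes> w = w \<otimes> p" using commute[OF p w] cab by simp
  have cpy: "p \<otimes> y = y \<otimes> p" using commute[OF p y] av bnd by simp
  have kk: "comm G k f \<in> lcs G (Suc (Suc b0))" using comm_gen[OF k f] .
  have "teq G (tgen y (w \<otimes> f)) (tgen y w @ tgen (gconj G w y) (gconj G w f))"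
    using R2[OF yc wc f] .
  also have "gconj G w y = y" using gconj_commute2[OF wc yc cyw] .
  also have "gconj G w f = k \<otimes> f" unfolding k_def using gconj_comm[OF wc f] .
  also have "teq G (tgen y w @ tgen y (k \<otimes> f)) (tgen y w @ (tgen y k @ tgen (gconj G k y) (gconj G k f)))"
    using teq_app_l[OF R2[OF yc kc f]] .
  also have "gconj G k y = y" using gconj_commute1[OF kc yc cky] .
  also have "gconj G k f = comm G k f \<otimes> f" using gconj_comm[OF kc f] .
  also have "teq G (tgen y w @ (tgen y k @ tgen y (comm G k f \<otimes> f))) (tgen y w @ (tgen y k @ tgen y f))"
    using P[OF _ _ y kk f] cab by (intro teq_app_l) simp
  finally have L: "teq G (tgen y (w \<otimes> f)) (tgen y w @ (tgen y k @ tgen y f))" .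
  define w' where "w' = inv f \<otimes> w \<otimes> f"
  have w'c: "w' \<in> carrier G" unfolding w'_def using wc f by simp
  have ew: "w \<otimes> f = f \<otimes> w'" unfolding w'_def using wc f by (simp add: gsimps)
  have "teq G (tgen y (w \<otimes> f)) (tgen y f @ tgen (gconj G f y) (gconj G f w'))"
    unfolding ew using R2[OF yc f w'c] .
  also have "gconj G f w' = w" unfolding w'_def gconj_def using wc f by (simp add: gsimps)
  also have "gconj G f y = p \<otimes> y" unfolding p_def using gconj_comm[OF f yc] .
  also have "teq G (tgen y f @ tgen (p \<otimes> y) w) (tgen y f @ (tgen (gconj G p y) (gconj G p w) @ tgen p w))"
    using teq_app_l[OF R1[OF pc yc wc]] .
  also have "gconj G p y = y" using gconj_commute1[OF pc yc cpy] .
  also have "gconj G p w = w" using gconj_commute1[OF pc wc cpw] .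
  also have "teq G (tgen y f @ (tgen y w @ tgen p w)) (tgen y f @ (tgen y w @ []))"
    using Vlow[OF p w] by (intro teq_app_l)
  finally have R: "teq G (tgen y (w \<otimes> f)) (tgen y f @ tgen y w)" by simp
  have C: "teq G (tgen y w @ tgen y f) (tgen y f @ tgen y w)"
    using commute_T[OF yc wc yc f] cyw by simp
  have "teq G (tgen y w @ (tgen y k @ tgen y f)) (tgen y w @ ([] @ tgen y f))"
    using tcong.trans[OF tcong.trans[OF tcong.sym[OF L] R] tcong.sym[OF C]] by simp
  then have "teq G (tgen y k @ tgen y f) ([] @ tgen y f)" using cancel_l[OF valid_tgen[OF yc wc]] by simp
  then have "teq G (tgen y k) []" using cancel_r[OF valid_tgen[OF yc f]] by simp
  then show ?thesis unfolding k_def .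
qed

lemma gen_closure:
  assumes gen: "\<And>y w f. y \<in> lcs G a \<Longrightarrow> w \<in> lcs G b0 \<Longrightarrow> f \<in> carrier G \<Longrightarrow> teq G (tgen y (comm G w f)) []"
    and cab: "c \<le> a + Suc b0"
    and z: "z \<in> lcs G (Suc b0)"
  shows "\<forall>g \<in> carrier G. \<forall>y \<in> lcs G a. teq G (tgen y (gconj G g z)) []"
  using z unfolding lcs_Suc
proof (induction z rule: generate.induct)
  case one
  show ?case
  proof (intro ballI)
    fix g y assume g: "g \<in> carrier G" and y: "y \<in> lcs G a"
    have "gconj G g \<one> = \<one>" using g by (simp add: gconj_def)
    then show "teq G (tgen y (gconj G g \<one>)) []" using T_one_r[OF lcs_carrier[OF y]] by simp
  qed
next
  case (incl h)
  then obtain w f where wf: "w \<in> lcs G b0" "f \<in> carrier G" "h = comm G w f" by blast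
  show ?case
  proof (intro ballI)
    fix g y assume g: "g \<in> carrier G" and y: "y \<in> lcs G a"
    have wc: "w \<in> carrier G" using lcs_carrier[OF wf(1)] .
    have "gconj G g h = comm G (gconj G g w) (gconj G g f)"
      using wf wc g by (simp add: gconj_def comm_def gsimps)
    moreover have "gconj G g w \<in> lcs G b0" unfolding gconj_def using lcs_conj[OF g wf(1)] .
    ultimately show "teq G (tgen y (gconj G g h)) []" using gen[OF y _ gconj_closed[OF g wf(2)]] by simp
  qed
next
  case (inv h)
  then obtain w f where wf: "w \<in> lcs G b0" "f \<in> carrier G" "h = comm G w f" by blast
  show ?case
  proof (intro ballI)
    fix g y assume g: "g \<in> carrier G" and y: "y \<in> lcs G a"
    have wc: "w \<in> carrier G" using lcs_carrier[OF wf(1)] .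
    have yc: "y \<in> carrier G" using lcs_carrier[OF y] .
    define z' where "z' = comm G (gconj G g w) (gconj G g f)"
    have z'c: "z' \<in> carrier G" unfolding z'_def using wc g wf(2) by simp
    have e: "gconj G g (inv h) = inv z'"
      unfolding z'_def using wf wc g by (simp add: gconj_def comm_def gsimps)
    have gw: "gconj G g w \<in> lcs G b0" unfolding gconj_def using lcs_conj[OF g wf(1)] .
    have y': "gconj G (inv z') y \<in> lcs G a" unfolding gconj_def using lcs_conj[OF inv_closed[OF z'c] y] .
    have "teq G (tgen (gconj G (inv z') y) z') []"
      unfolding z'_def using gen[OF y'[unfolded z'_def] gw gconj_closed[OF g wf(2)]] .
    from T_inv[OF yc z'c this] show "teq G (tgen y (gconj G g (inv h))) []" using e by simp
  qed
next
  case (eng h1 h2)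
  have h1: "h1 \<in> lcs G (Suc b0)" and h2: "h2 \<in> lcs G (Suc b0)" using eng.hyps unfolding lcs_Suc by auto
  have h1c: "h1 \<in> carrier G" and h2c: "h2 \<in> carrier G" using lcs_carrier h1 h2 by auto
  show ?case
  proof (intro ballI)
    fix g y assume g: "g \<in> carrier G" and y: "y \<in> lcs G a"
    have yc: "y \<in> carrier G" using lcs_carrier[OF y] .
    define z1 where "z1 = gconj G g h1"
    have z1: "z1 \<in> lcs G (Suc b0)" unfolding z1_def gconj_def using lcs_conj[OF g h1] .
    have z1c: "z1 \<in> carrier G" using lcs_carrier[OF z1] .
    have e: "gconj G g (h1 \<otimes> h2) = z1 \<otimes> gconj G g h2"
      unfolding z1_def using g h1c h2c by (simp add: gconj_def gsimps)
    have e2: "gconj G z1 (gconj G g h2) = gconj G (z1 \<otimes> g) h2"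
      using g h2c z1c by (simp add: gconj_def gsimps)
    have cz: "z1 \<otimes> y = y \<otimes> z1" using commute[OF z1 y] cab by simp
    have "teq G (tgen y (gconj G g (h1 \<otimes> h2))) (tgen y z1 @ tgen (gconj G z1 y) (gconj G z1 (gconj G g h2)))"
      unfolding e using R2[OF yc z1c gconj_closed[OF g h2c]] .
    also have "teq G (tgen y z1 @ tgen (gconj G z1 y) (gconj G z1 (gconj G g h2))) ([] @ [])"
    proof (rule teq_app)
      show "teq G (tgen y z1) []" unfolding z1_def using eng.IH(1) g y by blast
      have "teq G (tgen y (gconj G (z1 \<otimes> g) h2)) []" using eng.IH(2) z1c g y by blast
      then show "teq G (tgen (gconj G z1 y) (gconj G z1 (gconj G g h2))) []"
        using gconj_commute1[OF z1c yc cz] e2 by simp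
    qed
    finally show "teq G (tgen y (gconj G g (h1 \<otimes> h2))) []" by simp
  qed
qed

lemma V_aux: "2 * c - (a + b) \<le> d \<Longrightarrow> v \<le> a \<Longrightarrow> c \<le> a + b \<Longrightarrow> y \<in> lcs G a \<Longrightarrow> z \<in> lcs G b
   \<Longrightarrow> teq G (tgen y z) []"
proof (induction d arbitrary: a b y z)
  case 0
  then have "c \<le> a \<or> c \<le> b" by linarith
  then show ?case
  proof
    assume "c \<le> a" then have "y = \<one>" using triv 0 by blast
    then show ?thesis using T_one_l[OF lcs_carrier[OF 0(5)]] by simp
  next
    assume "c \<le> b" then have "z = \<one>" using triv 0 by blast
    then show ?thesis using T_one_r[OF lcs_carrier[OF 0(4)]] by simp
  qed
next
  case (Suc d)
  note outerIH = Suc.IH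
  have inner: "teq G (tgen y z) []"
    if "2 * c - (a + b) \<le> Suc d" "v \<le> a" "c \<le> a + b" "y \<in> lcs G a" "z \<in> lcs G b" for a b y z
    using that
  proof (induction b arbitrary: a y z)
    case 0
    then have "y = \<one>" using triv by simp
    then show ?case using T_one_l[OF lcs_carrier[OF 0(5)]] by simp
  next
    case (Suc b0)
    have d: "2 * c - (a + Suc b0) \<le> Suc d" and av: "v \<le> a" and cab: "c \<le> a + Suc b0"
      and y: "y \<in> lcs G a" and z: "z \<in> lcs G (Suc b0)" using Suc.prems by auto
    have Vhi: "teq G (tgen y' z') []" if "Suc b0 < b'" "y' \<in> lcs G a" "z' \<in> lcs G b'" for b' y' z'
      using outerIH[of a b' y' z'] d av cab that by simp
    have Vlow: "teq G (tgen y' z') []" if "y' \<in> lcs G (Suc a)" "z' \<in> lcs G b0" for y' z'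
      using Suc.IH[of "Suc a" y' z'] d av cab that by simp
    have P: "teq G (tgen y' (z' \<otimes> f)) (tgen y' f)"
      if "Suc b0 < b'" "c \<le> a + b'" "y' \<in> lcs G a" "z' \<in> lcs G b'" "f \<in> carrier G" for b' y' z' f
      using P_aux[of "Suc b0" a b' "c - b'" y' z' f] Vhi that by blast
    have gen: "teq G (tgen y' (comm G w f)) []"
      if "y' \<in> lcs G a" "w \<in> lcs G b0" "f \<in> carrier G" for y' w f
      by (rule gen_step[OF _ _ av cab that]; (rule Vlow P; assumption))
    have "\<forall>g \<in> carrier G. \<forall>y \<in> lcs G a. teq G (tgen y (gconj G g z)) []"
      using gen_closure[OF gen cab z] by blast
    then have "teq G (tgen y (gconj G \<one> z)) []" using y by blast
    then show ?case using lcs_carrier[OF z] by simp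
  qed
  show ?case using inner Suc.prems by blast
qed

lemma gens_commute:
  assumes x: "x \<in> lcs G v" and y: "y \<in> lcs G v" and g: "g \<in> carrier G" and h: "h \<in> carrier G"
  shows "teq G (tgen x g @ tgen y h) (tgen y h @ tgen x g)"
proof -
  have xc: "x \<in> carrier G" using lcs_carrier[OF x] .
  have yc: "y \<in> carrier G" using lcs_carrier[OF y] .
  define q where "q = inv (g \<otimes> x)"
  have qc: "q \<in> carrier G" unfolding q_def using xc g by simp
  define k where "k = comm G x g"
  have k: "k \<in> lcs G (Suc v)" unfolding k_def using comm_gen[OF x g] .
  have kc: "k \<in> carrier G" using lcs_carrier[OF k] .
  have kh: "comm G k h \<in> lcs G (Suc (Suc v))" using comm_gen[OF k h] .
  have cky: "k \<otimes> y = y \<otimes> k" using commute[OF k y] bnd by simp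
  have e1: "gconj G (g \<otimes> x) (gconj G q y) = y" "gconj G (g \<otimes> x) (gconj G q h) = h"
    unfolding q_def using xc yc g h by (simp_all add: gconj_def gsimps)
  have e2: "gconj G (x \<otimes> g) (gconj G q y) = gconj G k y" "gconj G (x \<otimes> g) (gconj G q h) = gconj G k h"
    unfolding q_def k_def using xc yc g h by (simp_all add: gconj_def comm_def gsimps)
  have "teq G (tgen x g @ tgen y h) (tgen (gconj G k y) (gconj G k h) @ tgen x g)"
    using conj_ident[OF xc g gconj_closed[OF qc yc] gconj_closed[OF qc h]] e1 e2 by simp
  also have "gconj G k y = y" using gconj_commute1[OF kc yc cky] .
  also have "gconj G k h = comm G k h \<otimes> h" using gconj_comm[OF kc h] .
  also have "teq G (tgen y (comm G k h \<otimes> h) @ tgen x g) (tgen y h @ tgen x g)"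
  proof (rule teq_app_r)
    have V: "teq G (tgen y' z') []" if "Suc v < b'" "y' \<in> lcs G v" "z' \<in> lcs G b'" for b' y' z'
      using V_aux[of v b' "2 * c" y' z'] that bnd by simp
    show "teq G (tgen y (comm G k h \<otimes> h)) (tgen y h)"
      using P_aux[of "Suc v" v "Suc (Suc v)" "c - Suc (Suc v)" y "comm G k h" h] V y kh h bnd by simp
  qed
  finally show ?thesis .
qed

lemma letter_commute:
  assumes l1: "l1 \<in> tletters G (lcs G v)" and l2: "l2 \<in> tletters G (lcs G v)"
  shows "teq G ([l1] @ [l2]) ([l2] @ [l1])"
proof -
  have gen_inv: "teq G (winv A @ B) (B @ winv A)"
    if "valid G A" "valid G B" "teq G (A @ B) (B @ A)" for A B
  proof -
    have "teq G (winv A @ B) (winv A @ (B @ (A @ winv A)))"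
      using teq_app_l[OF teq_app_l[OF teq_inv_r[OF that(1)]], of "winv A" B] by (simp add: tcong.sym)
    also have "teq G (winv A @ (B @ (A @ winv A))) (winv A @ ((A @ B) @ winv A))"
      using teq_app_l[OF teq_app_r[OF tcong.sym[OF that(3)]], of "winv A" "winv A"] by simp
    also have "teq G (winv A @ ((A @ B) @ winv A)) (B @ winv A)"
      using teq_app_r[OF teq_inv_l[OF that(1)], of "B @ winv A"] by simp
    finally show ?thesis .
  qed
  have form: "\<exists>x g. x \<in> lcs G v \<and> g \<in> carrier G \<and> ([l] = tgen x g \<or> [l] = winv (tgen x g))"
    if "l \<in> tletters G (lcs G v)" for l
  proof -
    obtain b x g where "l = (b, (x, g))" by (cases l) auto
    then show ?thesis using that by (cases b) (auto simp: tletters_def tgen_def winv_def)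
  qed
  obtain x g where xg: "x \<in> lcs G v" "g \<in> carrier G" "[l1] = tgen x g \<or> [l1] = winv (tgen x g)"
    using form[OF l1] by blast
  obtain y h where yh: "y \<in> lcs G v" "h \<in> carrier G" "[l2] = tgen y h \<or> [l2] = winv (tgen y h)"
    using form[OF l2] by blast
  have xc: "x \<in> carrier G" using lcs_carrier[OF xg(1)] .
  have yc: "y \<in> carrier G" using lcs_carrier[OF yh(1)] .
  have vA: "valid G (tgen x g)" using xc xg(2) by simp
  have vB: "valid G (tgen y h)" using yc yh(2) by simp
  have c0: "teq G (tgen x g @ tgen y h) (tgen y h @ tgen x g)" using gens_commute[OF xg(1) yh(1) xg(2) yh(2)] .
  have c1: "teq G (winv (tgen x g) @ tgen y h) (tgen y h @ winv (tgen x g))" using gen_inv[OF vA vB c0] .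
  have c2: "teq G (winv (tgen y h) @ tgen x g) (tgen x g @ winv (tgen y h))"
    using gen_inv[OF vB vA tcong.sym[OF c0]] .
  have c3: "teq G (winv (tgen y h) @ winv (tgen x g)) (winv (tgen x g) @ winv (tgen y h))"
    using gen_inv[OF vB valid_winv[OF vA] tcong.sym[OF c1]] .
  show ?thesis using xg(3) yh(3) c0 c1 c2 c3 tcong.sym by metis
qed

lemma word_commute:
  assumes u: "set u \<subseteq> tletters G (lcs G v)" and w: "set w \<subseteq> tletters G (lcs G v)"
  shows "teq G (u @ w) (w @ u)"
proof -
  have one: "teq G ([l] @ w) (w @ [l])" if l: "l \<in> tletters G (lcs G v)" and w: "set w \<subseteq> tletters G (lcs G v)" for l w
    using w
  proof (induction w)
    case Nil then show ?case by (simp add: tcong.refl)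
  next
    case (Cons l' w)
    have "teq G (([l] @ [l']) @ w) (([l'] @ [l]) @ w)"
      using teq_app_r[OF letter_commute[OF l]] Cons.prems by simp
    also have "teq G (([l'] @ [l]) @ w) ([l'] @ (w @ [l]))"
      using teq_app_l[OF Cons.IH, of "[l']"] Cons.prems by simp
    finally show ?case by simp
  qed
  show ?thesis using u
  proof (induction u)
    case Nil then show ?case by (simp add: tcong.refl)
  next
    case (Cons l u)
    have "teq G ([l] @ (u @ w)) ([l] @ (w @ u))"
      using teq_app_l[OF Cons.IH, of "[l]"] Cons.prems by simp
    also have "teq G ([l] @ (w @ u)) ((w @ [l]) @ u)"
      using teq_app_r[OF one[OF _ w], of l u] Cons.prems by simp
    finally show ?case by simp
  qed
qed

end

lemma tclass_eq: "teq G w1 w2 \<Longrightarrow> tclass G (carrier G) w1 = tclass G (carrier G) w2"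
  unfolding tclass_def using tcong.trans tcong.sym by blast

lemma trep_in: "w \<in> A \<Longrightarrow> trep A \<in> A"
  unfolding trep_def by (rule someI)

lemma tletters_mono: "N \<subseteq> M \<Longrightarrow> tletters G N \<subseteq> tletters G M"
  unfolding tletters_def by auto

lemma image_elem:
  assumes "N \<subseteq> carrier G"
    and "a \<in> tensor_incl G N ` carrier (tensor G N)"
  shows "\<exists>u. set u \<subseteq> tletters G N \<and> a = tclass G (carrier G) u \<and> teq G u (trep a)
             \<and> valid G (trep a)"
proof -
  obtain A where A: "A \<in> carrier (tensor G N)" and a: "a = tensor_incl G N A" using assms(2) by blast
  obtain w0 where w0: "set w0 \<subseteq> tletters G N" "A = tclass G N w0" using A unfolding tensor_def by auto
  have "w0 \<in> A" unfolding w0(2) tclass_def using w0(1) tcong.refl by blast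
  then have "trep A \<in> A" by (rule trep_in)
  then have u: "set (trep A) \<subseteq> tletters G N" unfolding w0(2) tclass_def by blast
  have uv: "valid G (trep A)" using u tletters_mono[OF assms(1)] by blast
  have ae: "a = tclass G (carrier G) (trep A)" unfolding a tensor_incl_def ..
  have "trep A \<in> a" unfolding ae tclass_def using uv tcong.refl by blast
  then have "trep a \<in> a" by (rule trep_in)
  then have "teq G (trep A) (trep a)" "valid G (trep a)" unfolding ae tclass_def by auto
  then show ?thesis using u ae by blast
qed

theorem lemma5p1:
  fixes G (structure) and c :: nat
  assumes "group G" and "nilpotent_class G c"
  defines "n \<equiv> nat \<lceil>real c / 2\<rceil>"
  shows "\<forall>a \<in> tensor_incl G (gamma G n) ` carrier (tensor G (gamma G n)).
         \<forall>b \<in> tensor_incl G (gamma G n) ` carrier (tensor G (gamma G n)).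
           a \<otimes>\<^bsub>tensor G (carrier G)\<^esub> b = b \<otimes>\<^bsub>tensor G (carrier G)\<^esub> a"
proof -
  have c2: "c \<le> 2 * n"
  proof -
    have "real c / 2 \<le> of_int \<lceil>real c / 2\<rceil>" by (rule le_of_int_ceiling)
    moreover have "0 \<le> \<lceil>real c / 2\<rceil>" by simp
    ultimately have "real c / 2 \<le> real n" unfolding n_def by simp
    then show ?thesis by linarith
  qed
  have bnd: "c \<le> 2 * (n - 1) + 2" using c2 by linarith
  have nil: "lcs G c = {\<one>\<^bsub>G\<^esub>}" using assms(2) unfolding nilpotent_class_def gamma_def by simp
  interpret nilp G c "n - 1"
    by (rule nilp.intro[OF assms(1)]) (unfold_locales, rule nil, rule bnd)
  have N: "gamma G n = lcs G (n - 1)" by (simp add: gamma_def)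
  have Nsub: "lcs G (n - 1) \<subseteq> carrier G" by (rule lcs_sub)
  show ?thesis unfolding N
  proof (intro ballI)
    fix a b
    assume a: "a \<in> tensor_incl G (lcs G (n - 1)) ` carrier (tensor G (lcs G (n - 1)))"
       and b: "b \<in> tensor_incl G (lcs G (n - 1)) ` carrier (tensor G (lcs G (n - 1)))"
    obtain u where u: "set u \<subseteq> tletters G (lcs G (n - 1))" "a = tclass G (carrier G) u"
        "teq G u (trep a)" "valid G (trep a)"
      using image_elem[OF Nsub a] by blast
    obtain w where w: "set w \<subseteq> tletters G (lcs G (n - 1))" "b = tclass G (carrier G) w"
        "teq G w (trep b)" "valid G (trep b)"
      using image_elem[OF Nsub b] by blast
    have "teq G (trep a @ trep b) (u @ w)" using teq_app[OF tcong.sym[OF u(3)] tcong.sym[OF w(3)]] .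
    also have "teq G (u @ w) (w @ u)" by (rule word_commute[OF u(1) w(1)])
    also have "teq G (w @ u) (trep b @ trep a)" using teq_app[OF w(3) u(3)] .
    finally have "tclass G (carrier G) (trep a @ trep b) = tclass G (carrier G) (trep b @ trep a)"
      by (rule tclass_eq)
    then show "a \<otimes>\<^bsub>tensor G (carrier G)\<^esub> b = b \<otimes>\<^bsub>tensor G (carrier G)\<^esub> a"
      by (simp add: tensor_def)
  qed
qed

end
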